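(* Let $\varphi(x)$, $x\in\mathbb{C}^n$, be given in disjunctive normal form $$\varphi(x)=\bigvee_{i=1}^{d}\Big(\bigwedge_{j=1}^{e_i} t_{ij}(x)=0\;\wedge\;\bigwedge_{k=1}^{f_i} u_{ik}(x)\neq 0\Big),$$ with $t_{ij},u_{ik}\in\mathbb{C}[x_1,\dots,x_n]$, having $d$ disjuncts and a total of $e=\sum_i e_i$ equations. Then there is a polynomial $p(a,b,x)\in\mathbb{C}[a,b,x]$ of degree at most $d$ in $a$ and at most $e$ in $b$ such that for all $x\in\mathbb{C}^n$, $$\varphi(x)\iff(\exists a\in\mathbb{C})(\forall b\in\mathbb{C})\;p(a,b,x)=0.$$ Explicitly, one may take $p(a,b,x)=\prod_{i=1}^d\Big[\big(1-a\prod_{k=1}^{f_i}u_{ik}(x)\big)+\sum_{j=1}^{e_i}t_{ij}(x)\,b^j\Big]$.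
   Context: Empty products are $1$ and empty sums are $0$; $a,b$ are single scalar variables. *)

theory Defs
  imports "HOL-Analysis.Analysis"
begin

text \<open>Over the infinite field C these are exactly the functions given by C[x_1,...,x_n].\<close>

inductive polyfun :: "(complex ^ 'n \<Rightarrow> complex) \<Rightarrow> bool" where
  const: "polyfun (\<lambda>x. c)"
| coord: "polyfun (\<lambda>x. x $ i)"
| add: "polyfun f \<Longrightarrow> polyfun g \<Longrightarrow> polyfun (\<lambda>x. f x + g x)"
| mult: "polyfun f \<Longrightarrow> polyfun g \<Longrightarrow> polyfun (\<lambda>x. f x * g x)"

end

theory Submission
  imports Defs "HOL-Computational_Algebra.Polynomial"
begin

lemma polyfun_sum: "finite A \<Longrightarrow> (\<And>i. i \<in> A \<Longrightarrow> polyfun (g i)) \<Longrightarrow> polyfun (\<lambda>x. \<Sum>i\<in>A. g i x)"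
proof (induction A rule: finite_induct)
  case empty then show ?case using polyfun.const[of 0] by simp
next
  case (insert a A) then show ?case by (simp add: polyfun.add)
qed

lemma polyfun_prod: "finite A \<Longrightarrow> (\<And>i. i \<in> A \<Longrightarrow> polyfun (g i)) \<Longrightarrow> polyfun (\<lambda>x. \<Prod>i\<in>A. g i x)"
proof (induction A rule: finite_induct)
  case empty then show ?case using polyfun.const[of 1] by simp
next
  case (insert a A) then show ?case by (simp add: polyfun.mult)
qed

definition pc :: "(complex ^ 'n \<Rightarrow> complex poly poly) \<Rightarrow> bool" where
  "pc B \<longleftrightarrow> (\<forall>p q. polyfun (\<lambda>x. coeff (coeff (B x) p) q))"

lemma pc_mult: assumes "pc B1" "pc B2" shows "pc (\<lambda>x. B1 x * B2 x)"
  unfolding pc_def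
proof (intro allI)
  fix p q
  have "(\<lambda>x. coeff (coeff (B1 x * B2 x) p) q) =
     (\<lambda>x. \<Sum>i\<le>p. \<Sum>j\<le>q. coeff (coeff (B1 x) i) j * coeff (coeff (B2 x) (p - i)) (q - j))"
    by (simp add: coeff_mult coeff_sum)
  moreover have "polyfun \<dots>"
    using assms unfolding pc_def
    by (intro polyfun_sum polyfun.mult) auto
  ultimately show "polyfun (\<lambda>x. coeff (coeff (B1 x * B2 x) p) q)" by simp
qed

lemma pc_one: "pc (\<lambda>x. 1)"
  unfolding pc_def
proof (intro allI)
  fix p q
  show "polyfun (\<lambda>x. coeff (coeff (1::complex poly poly) p) q)"
    using polyfun.const[of "coeff (coeff (1::complex poly poly) p) q"] by simp
qed

lemma coeff_deg_mult:
  assumes "\<And>p. degree (coeff B1 p) \<le> E1" "\<And>p. degree (coeff B2 p) \<le> E2"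
  shows "degree (coeff (B1 * B2) p) \<le> E1 + E2"
  unfolding coeff_mult
  by (rule degree_sum_le) (auto intro: order.trans[OF degree_mult_le] add_mono assms)

lemma prod_lemma:
  assumes "finite I" "\<And>i. i \<in> I \<Longrightarrow> pc (B i)"
    "\<And>i x. i \<in> I \<Longrightarrow> degree (B i x) \<le> 1"
    "\<And>i x p. i \<in> I \<Longrightarrow> degree (coeff (B i x) p) \<le> E i"
  shows "pc (\<lambda>x. \<Prod>i\<in>I. B i x) \<and> (\<forall>x. degree (\<Prod>i\<in>I. B i x) \<le> card I)
     \<and> (\<forall>x p. degree (coeff (\<Prod>i\<in>I. B i x) p) \<le> (\<Sum>i\<in>I. E i))"
  using assms
proof (induction I rule: finite_induct)
  case empty
  then show ?case using pc_one by (simp add: coeff_1)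
next
  case (insert a A)
  have pcA: "pc (\<lambda>x. \<Prod>i\<in>A. B i x)" and dA: "\<And>x. degree (\<Prod>i\<in>A. B i x) \<le> card A"
    and cA: "\<And>x p. degree (coeff (\<Prod>i\<in>A. B i x) p) \<le> (\<Sum>i\<in>A. E i)"
    using insert by auto
  have "pc (\<lambda>x. B a x * (\<Prod>i\<in>A. B i x))"
    by (rule pc_mult) (use insert pcA in auto)
  moreover have "degree (B a x * (\<Prod>i\<in>A. B i x)) \<le> card (insert a A)" for x
    using order.trans[OF degree_mult_le add_mono[OF insert.prems(2)[of a x] dA[of x]]] insert by simp
  moreover have "degree (coeff (B a x * (\<Prod>i\<in>A. B i x)) p) \<le> (\<Sum>i\<in>insert a A. E i)" for x p
    using coeff_deg_mult[of "B a x" "E a" "\<Prod>i\<in>A. B i x" "\<Sum>i\<in>A. E i" p] insert cA by simp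
  ultimately show ?case using insert by simp
qed

lemma poly_upto: fixes x :: "'a::{comm_semiring_0,semiring_1}" shows "degree p \<le> n \<Longrightarrow> poly p x = (\<Sum>i\<le>n. coeff p i * x ^ i)"
proof -
  assume "degree p \<le> n"
  then have "(\<Sum>i\<le>degree p. coeff p i * x ^ i) = (\<Sum>i\<le>n. coeff p i * x ^ i)"
    by (intro sum.mono_neutral_left) (auto simp: coeff_eq_0)
  then show ?thesis by (simp add: poly_altdef)
qed

lemma ev_expand:
  fixes B :: "complex poly poly"
  assumes "degree B \<le> D" "\<And>p. degree (coeff B p) \<le> E"
  shows "poly (poly B [:a:]) b = (\<Sum>p\<le>D. \<Sum>q\<le>E. coeff (coeff B p) q * a ^ p * b ^ q)"
proof -
  have "poly B [:a:] = (\<Sum>p\<le>D. coeff B p * [:a:] ^ p)" by (rule poly_upto[OF assms(1)])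
  then have "poly (poly B [:a:]) b = (\<Sum>p\<le>D. poly (coeff B p) b * a ^ p)"
    by (simp add: poly_sum)
  also have "\<dots> = (\<Sum>p\<le>D. (\<Sum>q\<le>E. coeff (coeff B p) q * b ^ q) * a ^ p)"
    using poly_upto[OF assms(2)] by simp
  also have "\<dots> = (\<Sum>p\<le>D. \<Sum>q\<le>E. coeff (coeff B p) q * a ^ p * b ^ q)"
    by (simp add: sum_distrib_right sum_distrib_left mult_ac)
  finally show ?thesis .
qed

theorem theorem4p1:
  fixes d :: nat and e f :: "nat \<Rightarrow> nat"
    and t u :: "nat \<Rightarrow> nat \<Rightarrow> complex ^ 'n \<Rightarrow> complex"
  assumes t_poly: "\<And>i j. i \<in> {1..d} \<Longrightarrow> j \<in> {1..e i} \<Longrightarrow> polyfun (t i j)"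
    and u_poly: "\<And>i k. i \<in> {1..d} \<Longrightarrow> k \<in> {1..f i} \<Longrightarrow> polyfun (u i k)"
  shows "(\<exists>c :: nat \<Rightarrow> nat \<Rightarrow> complex ^ 'n \<Rightarrow> complex.
            (\<forall>i j. polyfun (c i j)) \<and>
            (\<forall>x. (\<exists>i\<in>{1..d}. (\<forall>j\<in>{1..e i}. t i j x = 0) \<and> (\<forall>k\<in>{1..f i}. u i k x \<noteq> 0))
                 \<longleftrightarrow> (\<exists>a. \<forall>b. (\<Sum>p\<le>d. \<Sum>q\<le>(\<Sum>i=1..d. e i). c p q x * a ^ p * b ^ q) = 0)))
       \<and> (\<forall>x. (\<exists>i\<in>{1..d}. (\<forall>j\<in>{1..e i}. t i j x = 0) \<and> (\<forall>k\<in>{1..f i}. u i k x \<noteq> 0))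
                 \<longleftrightarrow> (\<exists>a. \<forall>b. (\<Prod>i=1..d. (1 - a * (\<Prod>k=1..f i. u i k x))
                                        + (\<Sum>j=1..e i. t i j x * b ^ j)) = 0))"
proof -
  define U where "U i x = (\<Prod>k=1..f i. u i k x)" for i x
  define P0 where "P0 i x = [:1:] + (\<Sum>j=1..e i. monom (t i j x) j)" for i x
  have polyP0: "poly (P0 i x) b = 1 + (\<Sum>j=1..e i. t i j x * b ^ j)" for i x b
    by (simp add: P0_def poly_sum poly_monom)
  have coeffP0: "coeff (P0 i x) q = (if q = 0 then 1 else 0) + (\<Sum>j\<in>{1..e i}. if j = q then t i j x else 0)" for i x q
    by (simp add: P0_def coeff_sum coeff_pCons split: nat.split)
  have degP0: "degree (P0 i x) \<le> e i" for i x
    unfolding P0_def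
    by (intro order.trans[OF degree_add_le] max.boundedI degree_sum_le) (auto simp: degree_monom_le intro: order.trans[OF degree_monom_le])
  define B where "B i x = [: P0 i x, [: - U i x :] :]" for i x
  have evB: "poly (poly (B i x) [:a:]) b = (1 - a * U i x) + (\<Sum>j=1..e i. t i j x * b ^ j)" for i x a b
    by (simp add: B_def polyP0 algebra_simps)
  have part2: "(\<exists>i\<in>{1..d}. (\<forall>j\<in>{1..e i}. t i j x = 0) \<and> (\<forall>k\<in>{1..f i}. u i k x \<noteq> 0))
     \<longleftrightarrow> (\<exists>a. \<forall>b. (\<Prod>i=1..d. (1 - a * (\<Prod>k=1..f i. u i k x)) + (\<Sum>j=1..e i. t i j x * b ^ j)) = 0)" for x
  proof
    assume "\<exists>i\<in>{1..d}. (\<forall>j\<in>{1..e i}. t i j x = 0) \<and> (\<forall>k\<in>{1..f i}. u i k x \<noteq> 0)"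
    then obtain i where i: "i \<in> {1..d}" "\<forall>j\<in>{1..e i}. t i j x = 0" "\<forall>k\<in>{1..f i}. u i k x \<noteq> 0" by blast
    have U0: "U i x \<noteq> 0" using i(3) by (simp add: U_def)
    show "\<exists>a. \<forall>b. (\<Prod>i=1..d. (1 - a * (\<Prod>k=1..f i. u i k x)) + (\<Sum>j=1..e i. t i j x * b ^ j)) = 0"
    proof (intro exI allI)
      fix b
      have "(1 - (1 / U i x) * (\<Prod>k=1..f i. u i k x)) + (\<Sum>j=1..e i. t i j x * b ^ j) = 0"
        proof -
        have "(\<Prod>k=1..f i. u i k x) = U i x" by (simp add: U_def)
        then show ?thesis using U0 i(2) by simp
      qed
      then show "(\<Prod>l=1..d. (1 - (1 / U i x) * (\<Prod>k=1..f l. u l k x)) + (\<Sum>j=1..e l. t l j x * b ^ j)) = 0"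
        using i(1) by (intro prod_zero) auto
    qed
  next
    assume "\<exists>a. \<forall>b. (\<Prod>i=1..d. (1 - a * (\<Prod>k=1..f i. u i k x)) + (\<Sum>j=1..e i. t i j x * b ^ j)) = 0"
    then obtain a where a: "\<And>b. (\<Prod>i=1..d. (1 - a * U i x) + (\<Sum>j=1..e i. t i j x * b ^ j)) = 0"
      by (auto simp: U_def)
    define Q where "Q i = P0 i x - [: a * U i x :]" for i
    have "poly (Q i) b = (1 - a * U i x) + (\<Sum>j=1..e i. t i j x * b ^ j)" for i b
      by (simp add: Q_def polyP0)
    then have "poly (\<Prod>i=1..d. Q i) = poly 0"
      using a by (simp add: poly_prod fun_eq_iff)
    then have "(\<Prod>i=1..d. Q i) = 0" by (simp add: poly_eq_poly_eq_iff)
    then obtain i where i: "i \<in> {1..d}" "Q i = 0" by auto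
    have "coeff (Q i) 0 = 0" using i by simp
    then have c0: "1 - a * U i x = 0" by (simp add: Q_def coeffP0)
    have "t i j x = 0" if "j \<in> {1..e i}" for j
    proof -
      have "coeff (Q i) j = 0" using i by simp
      moreover have "coeff (Q i) j = t i j x" using that
        by (simp add: Q_def coeffP0 coeff_pCons split: nat.split)
      ultimately show ?thesis by simp
    qed
    moreover have "U i x \<noteq> 0" using c0 by auto
    then have "\<forall>k\<in>{1..f i}. u i k x \<noteq> 0" by (simp add: U_def)
    ultimately show "\<exists>i\<in>{1..d}. (\<forall>j\<in>{1..e i}. t i j x = 0) \<and> (\<forall>k\<in>{1..f i}. u i k x \<noteq> 0)"
      using i(1) by blast
  qed
  have pcB: "pc (B i)" if "i \<in> {1..d}" for i
    unfolding pc_def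
  proof (intro allI)
    fix p q
    have pU: "polyfun (U i)" unfolding U_def
      using u_poly[OF that] by (intro polyfun_prod) auto
    have tj: "polyfun (\<lambda>x. if j = q then t i j x else 0)" if "j \<in> {1..e i}" for j
      using t_poly[OF \<open>i \<in> {1..d}\<close> that] by (cases "j = q") (auto intro: polyfun.const)
    have h1: "polyfun (\<lambda>x. coeff (P0 i x) q)"
      unfolding coeffP0
      by (intro polyfun.add polyfun_sum)
        (auto intro: polyfun.const tj)
    have h2: "polyfun (\<lambda>x. coeff [: - U i x :] q)"
      using polyfun.mult[OF polyfun.const[of "-1"] pU]
      by (cases q) (auto simp: polyfun.const)
    show "polyfun (\<lambda>x. coeff (coeff (B i x) p) q)"
    proof (cases p)
      case 0 then show ?thesis using h1 h2 by (simp add: B_def)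
    next
      case (Suc p') then show ?thesis using h1 h2
        by (cases p') (auto simp: B_def polyfun.const)
    qed
  qed
  have degB: "degree (B i x) \<le> 1" for i x by (simp add: B_def)
  have cdegB: "degree (coeff (B i x) p) \<le> e i" for i x p
    using degP0[of i x] by (cases p) (auto simp: B_def coeff_pCons split: nat.split)
  define BB where "BB x = (\<Prod>i\<in>{1..d}. B i x)" for x
  have BB: "pc BB" "\<And>x. degree (BB x) \<le> d" "\<And>x p. degree (coeff (BB x) p) \<le> (\<Sum>i=1..d. e i)"
    using prod_lemma[of "{1..d}" B e] pcB degB cdegB unfolding BB_def by auto
  define c where "c p q x = coeff (coeff (BB x) p) q" for p q x
  have "(\<Sum>p\<le>d. \<Sum>q\<le>(\<Sum>i=1..d. e i). c p q x * a ^ p * b ^ q)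
      = (\<Prod>i=1..d. (1 - a * (\<Prod>k=1..f i. u i k x)) + (\<Sum>j=1..e i. t i j x * b ^ j))" for x a b
  proof -
    have "(\<Sum>p\<le>d. \<Sum>q\<le>(\<Sum>i=1..d. e i). c p q x * a ^ p * b ^ q) = poly (poly (BB x) [:a:]) b"
      unfolding c_def by (rule ev_expand[symmetric]) (use BB in auto)
    also have "\<dots> = (\<Prod>i=1..d. poly (poly (B i x) [:a:]) b)"
      by (simp add: BB_def poly_prod)
    finally show ?thesis by (simp add: evB U_def)
  qed
  moreover have "\<forall>i j. polyfun (c i j)" using BB(1) by (simp add: pc_def c_def[abs_def])
  ultimately show ?thesis using part2 by (intro conjI exI[of _ c]) auto
qed

end
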